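(* Let $A_1,\dots,A_m\in\mathbb{S}^n$ and $b\in\mathbb{R}^m$. If Assumption 1 holds for some $p$, then it holds for every $p'\le p$ such that $\mathcal{M}_{p'}$ is non-empty. Furthermore, if Assumption 1(a) holds for $p=n$, then it holds for every $p'$ such that $\mathcal{M}_{p'}$ is non-empty. In both cases, the associated dimension $m'$ is independent of $p$.
   Context: $\mathbb{S}^n$: real symmetric $n\times n$ matrices; $\langle U,V\rangle=\operatorname{tr}(U^\top V)$. For $p\ge1$, $\mathcal{M}_p=\{Y\in\mathbb{R}^{n\times p}:\langle A_i,YY^\top\rangle=b_i,\ i=1,\dots,m\}$. Assumption 1 (for a given $p$ with $\mathcal{M}_p\ne\emptyset$): either (a) $A_1Y,\dots,A_mY$ are linearly independent in $\mathbb{R}^{n\times p}$ for all $Y\in\mathcal{M}_p$, or (b) $\operatorname{span}\{A_1Y,\dots,A_mY\}$ has the same dimension for all $Y$ in an open neighborhood of $\mathcal{M}_p$ in $\mathbb{R}^{n\times p}$. In either case $m'$ denotes the dimension of $\operatorname{span}\{A_1Y,\dots,A_mY\}$ for $Y\in\mathcal{M}_p$. *)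

theory Defs
  imports "HOL-Analysis.Analysis" "HOL-Library.Function_Algebras"
begin

text \<open>Real matrices are represented as functions nat => nat => real; an n x p matrix
  is such a function vanishing outside the index range {..<n} x {..<p}.
  The matrix dimension p varies inside the statement, so type-indexed
  dimensions cannot be used.\<close>

type_synonym rmat = "nat \<Rightarrow> nat \<Rightarrow> real"

definition mats :: "nat \<Rightarrow> nat \<Rightarrow> rmat set" where
  "mats n p = {Y. \<forall>i j. (n \<le> i \<or> p \<le> j) \<longrightarrow> Y i j = 0}"

definition smat :: "real \<Rightarrow> rmat \<Rightarrow> rmat" where
  "smat c Y = (\<lambda>i j. c * Y i j)"

definition sym_mat :: "nat \<Rightarrow> rmat \<Rightarrow> bool" where
  "sym_mat n A \<longleftrightarrow> (\<forall>i<n. \<forall>j<n. A i j = A j i)"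

definition frob :: "nat \<Rightarrow> nat \<Rightarrow> rmat \<Rightarrow> rmat \<Rightarrow> real" where
  "frob r s U V = (\<Sum>i<r. \<Sum>j<s. U i j * V i j)"

definition gram :: "nat \<Rightarrow> nat \<Rightarrow> rmat \<Rightarrow> rmat" where
  "gram n p Y = (\<lambda>i j. if i < n \<and> j < n then (\<Sum>k<p. Y i k * Y j k) else 0)"

definition mprod :: "nat \<Rightarrow> nat \<Rightarrow> rmat \<Rightarrow> rmat \<Rightarrow> rmat" where
  "mprod n p A Y = (\<lambda>i k. if i < n \<and> k < p then (\<Sum>j<n. A i j * Y j k) else 0)"

definition Mset :: "nat \<Rightarrow> nat \<Rightarrow> (nat \<Rightarrow> rmat) \<Rightarrow> (nat \<Rightarrow> real) \<Rightarrow> nat \<Rightarrow> rmat set" where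
  "Mset n m A b p = {Y \<in> mats n p. \<forall>l<m. frob n n (A l) (gram n p Y) = b l}"

definition lin_indep_AY :: "nat \<Rightarrow> nat \<Rightarrow> (nat \<Rightarrow> rmat) \<Rightarrow> nat \<Rightarrow> rmat \<Rightarrow> bool" where
  "lin_indep_AY n m A p Y \<longleftrightarrow>
     (\<forall>c :: nat \<Rightarrow> real. (\<lambda>i k. \<Sum>l<m. c l * mprod n p (A l) Y i k) = (\<lambda>i k. 0)
        \<longrightarrow> (\<forall>l<m. c l = 0))"

definition dimAY :: "nat \<Rightarrow> nat \<Rightarrow> (nat \<Rightarrow> rmat) \<Rightarrow> nat \<Rightarrow> rmat \<Rightarrow> nat" where
  "dimAY n m A p Y = vector_space.dim smat ((\<lambda>l. mprod n p (A l) Y) ` {..<m})"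

definition mdist :: "nat \<Rightarrow> nat \<Rightarrow> rmat \<Rightarrow> rmat \<Rightarrow> real" where
  "mdist n p Y Z = sqrt (\<Sum>i<n. \<Sum>j<p. (Y i j - Z i j)^2)"

definition open_mats :: "nat \<Rightarrow> nat \<Rightarrow> rmat set \<Rightarrow> bool" where
  "open_mats n p U \<longleftrightarrow> U \<subseteq> mats n p \<and>
     (\<forall>Y\<in>U. \<exists>e>0. \<forall>Z\<in>mats n p. mdist n p Y Z < e \<longrightarrow> Z \<in> U)"

definition assm1a :: "nat \<Rightarrow> nat \<Rightarrow> (nat \<Rightarrow> rmat) \<Rightarrow> (nat \<Rightarrow> real) \<Rightarrow> nat \<Rightarrow> bool" where
  "assm1a n m A b p \<longleftrightarrow> (\<forall>Y\<in>Mset n m A b p. lin_indep_AY n m A p Y)"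

definition assm1b :: "nat \<Rightarrow> nat \<Rightarrow> (nat \<Rightarrow> rmat) \<Rightarrow> (nat \<Rightarrow> real) \<Rightarrow> nat \<Rightarrow> bool" where
  "assm1b n m A b p \<longleftrightarrow> (\<exists>U. open_mats n p U \<and> Mset n m A b p \<subseteq> U \<and>
      (\<exists>d. \<forall>Y\<in>U. dimAY n m A p Y = d))"

definition Assumption1 :: "nat \<Rightarrow> nat \<Rightarrow> (nat \<Rightarrow> rmat) \<Rightarrow> (nat \<Rightarrow> real) \<Rightarrow> nat \<Rightarrow> bool" where
  "Assumption1 n m A b p \<longleftrightarrow> Mset n m A b p \<noteq> {} \<and> (assm1a n m A b p \<or> assm1b n m A b p)"

end

theory Submission
  imports Defs
begin

lemma sum_fun_app: "(sum f S) x = sum (\<lambda>a. f a x) S"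
  by (induction S rule: infinite_finite_induct) auto

interpretation VS: vector_space smat
  by unfold_locales (auto simp: smat_def fun_eq_iff algebra_simps)

lemma smat_sum_app: "(\<Sum>l\<in>S. smat (c l) (v l)) i k = (\<Sum>l\<in>S. c l * v l i k)"
  by (simp add: sum_fun_app smat_def)

lemma dim_indep:
  assumes li: "lin_indep_AY n m A p Y"
  shows "dimAY n m A p Y = m"
proof -
  define v where "v = (\<lambda>l. mprod n p (A l) Y)"
  have comb: "\<And>c. (\<Sum>l<m. smat (c l) (v l)) = 0 \<Longrightarrow> \<forall>l<m. c l = 0"
  proof -
    fix c assume h: "(\<Sum>l<m. smat (c l) (v l)) = 0"
    have "(\<lambda>i k. \<Sum>l<m. c l * mprod n p (A l) Y i k) = (\<lambda>i k. 0)"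
    proof (intro ext)
      fix i k
      have "(\<Sum>l<m. smat (c l) (v l)) i k = 0" using h by simp
      then show "(\<Sum>l<m. c l * mprod n p (A l) Y i k) = 0" by (simp add: smat_sum_app v_def)
    qed
    then show "\<forall>l<m. c l = 0" using li unfolding lin_indep_AY_def by blast
  qed
  have inj: "inj_on v {..<m}"
  proof (rule inj_onI, rule ccontr)
    fix a b assume a: "a \<in> {..<m}" and b: "b \<in> {..<m}" and e: "v a = v b" and ne: "a \<noteq> b"
    define c where "c = (\<lambda>l. if l = a then 1 else if l = b then -1 else (0::real))"
    have "(\<Sum>l<m. smat (c l) (v l)) = (\<Sum>l\<in>{a,b}. smat (c l) (v l))"
      by (rule sum.mono_neutral_right) (use a b in \<open>auto simp: c_def smat_def fun_eq_iff\<close>)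
    also have "\<dots> = 0" using ne e by (simp add: c_def smat_def fun_eq_iff)
    finally have "\<forall>l<m. c l = 0" by (rule comb)
    then have "c a = 0" using a by blast
    then show False by (simp add: c_def)
  qed
  have ind: "VS.independent (v ` {..<m})"
  proof -
    have "\<not> (\<exists>u. (\<exists>w \<in> v ` {..<m}. u w \<noteq> 0) \<and> (\<Sum>w\<in>v ` {..<m}. smat (u w) w) = 0)"
    proof
      assume "\<exists>u. (\<exists>w \<in> v ` {..<m}. u w \<noteq> 0) \<and> (\<Sum>w\<in>v ` {..<m}. smat (u w) w) = 0"
      then obtain u where u1: "\<exists>w \<in> v ` {..<m}. u w \<noteq> 0" and u2: "(\<Sum>w\<in>v ` {..<m}. smat (u w) w) = 0" by blast
      have "(\<Sum>l<m. smat (u (v l)) (v l)) = 0" using u2 by (simp add: sum.reindex[OF inj])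
      then have "\<forall>l<m. u (v l) = 0" by (rule comb)
      then show False using u1 by auto
    qed
    then show ?thesis using VS.dependent_finite[of "v ` {..<m}"] by auto
  qed
  have "dimAY n m A p Y = VS.dim (v ` {..<m})" by (simp add: dimAY_def v_def)
  also have "\<dots> = VS.dim (VS.span (v ` {..<m}))" by simp
  also have "\<dots> = card (v ` {..<m})" by (rule VS.dim_span_eq_card_independent[OF ind])
  also have "\<dots> = m" using card_image[OF inj] by simp
  finally show ?thesis .
qed


lemma mats_mono: "Y \<in> mats n p' \<Longrightarrow> p' \<le> p \<Longrightarrow> Y \<in> mats n p"
  unfolding mats_def by auto

lemma sum_ext_zero:
  fixes f :: "nat \<Rightarrow> real"
  assumes "p' \<le> p" "\<And>k. p' \<le> k \<Longrightarrow> k < p \<Longrightarrow> f k = 0"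
  shows "(\<Sum>k<p. f k) = (\<Sum>k<p'. f k)"
  by (rule sum.mono_neutral_right) (use assms in auto)

lemma gram_mono: "Y \<in> mats n p' \<Longrightarrow> p' \<le> p \<Longrightarrow> gram n p Y = gram n p' Y"
proof -
  assume a: "Y \<in> mats n p'" "p' \<le> p"
  have "\<And>i j. (\<Sum>k<p. Y i k * Y j k) = (\<Sum>k<p'. Y i k * Y j k)"
    by (rule sum_ext_zero) (use a in \<open>auto simp: mats_def\<close>)
  then show ?thesis unfolding gram_def by (simp only:)
qed

lemma mprod_mono: "Y \<in> mats n p' \<Longrightarrow> p' \<le> p \<Longrightarrow> mprod n p B Y = mprod n p' B Y"
  unfolding mprod_def mats_def by (intro ext) auto

lemma Mset_mono: "p' \<le> p \<Longrightarrow> Mset n m A b p' \<subseteq> Mset n m A b p"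
proof
  fix Y assume p: "p' \<le> p" and Y: "Y \<in> Mset n m A b p'"
  then have Ym: "Y \<in> mats n p'" by (simp add: Mset_def)
  have "gram n p Y = gram n p' Y" by (rule gram_mono[OF Ym p])
  then show "Y \<in> Mset n m A b p" using Y mats_mono[OF Ym p] by (simp add: Mset_def)
qed

lemma mdist_mono: "Y \<in> mats n p' \<Longrightarrow> Z \<in> mats n p' \<Longrightarrow> p' \<le> p \<Longrightarrow> mdist n p Y Z = mdist n p' Y Z"
proof -
  assume a: "Y \<in> mats n p'" "Z \<in> mats n p'" "p' \<le> p"
  have "\<And>i. (\<Sum>j<p. (Y i j - Z i j)^2) = (\<Sum>j<p'. (Y i j - Z i j)^2)"
    by (rule sum_ext_zero) (use a in \<open>auto simp: mats_def\<close>)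
  then show ?thesis unfolding mdist_def by (simp only:)
qed

lemma lin_indep_mono: "Y \<in> mats n p' \<Longrightarrow> p' \<le> p \<Longrightarrow> lin_indep_AY n m A p Y = lin_indep_AY n m A p' Y"
  proof -
  assume a: "Y \<in> mats n p'" "p' \<le> p"
  have "\<And>B. mprod n p B Y = mprod n p' B Y" using mprod_mono[OF a] .
  then show ?thesis unfolding lin_indep_AY_def by presburger
qed

lemma dimAY_mono: "Y \<in> mats n p' \<Longrightarrow> p' \<le> p \<Longrightarrow> dimAY n m A p Y = dimAY n m A p' Y"
  proof -
  assume a: "Y \<in> mats n p'" "p' \<le> p"
  have "\<And>B. mprod n p B Y = mprod n p' B Y" using mprod_mono[OF a] .
  then show ?thesis unfolding dimAY_def by presburger
qed


definition ip :: "nat \<Rightarrow> (nat \<Rightarrow> real) \<Rightarrow> (nat \<Rightarrow> real) \<Rightarrow> real" where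
  "ip q x y = (\<Sum>k<q. x k * y k)"

lemma ip_sym: "ip q x y = ip q y x"
  unfolding ip_def by (simp add: mult.commute)

lemma ip_lin_left: "ip q (\<lambda>k. \<Sum>l\<in>S. a l * f l k) y = (\<Sum>l\<in>S. a l * ip q (f l) y)"
  unfolding ip_def by (simp add: sum_distrib_left sum_distrib_right mult.assoc sum.swap[of _ S])

lemma ip_diff_left: "ip q (\<lambda>k. x k - z k) y = ip q x y - ip q z y"
  unfolding ip_def by (simp add: algebra_simps sum_subtractf)

lemma ip_add_left: "ip q (\<lambda>k. x k + z k) y = ip q x y + ip q z y"
  unfolding ip_def by (simp add: algebra_simps sum.distrib)

lemma ip_div_right: "ip q x (\<lambda>k. y k / s) = ip q x y / s"
  unfolding ip_def by (simp add: sum_divide_distrib)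

lemma ip_cong_left: "(\<And>k. k < q \<Longrightarrow> x k = x' k) \<Longrightarrow> ip q x y = ip q x' y"
  unfolding ip_def by simp

lemma ip_zero_right: "(\<And>k. k < q \<Longrightarrow> y k = 0) \<Longrightarrow> ip q x y = 0"
  unfolding ip_def by simp

lemma ip_self_zero: "ip q w w = 0 \<Longrightarrow> k < q \<Longrightarrow> w k = 0"
proof -
  assume h: "ip q w w = 0" and k: "k < q"
  have "\<forall>k\<in>{..<q}. w k * w k = 0"
    using h unfolding ip_def by (subst sum_nonneg_eq_0_iff[symmetric]) auto
  then show ?thesis using k by auto
qed

lemma ip_self_nonneg: "ip q w w \<ge> 0"
  unfolding ip_def by (auto intro: sum_nonneg)

lemma gs:
  fixes r :: "nat \<Rightarrow> nat \<Rightarrow> real"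
  shows "\<exists>u. (\<forall>l<i. ip q (u l) (u l) = 1 \<or> (\<forall>k<q. u l k = 0)) \<and>
             (\<forall>l<i. \<forall>l'<i. l \<noteq> l' \<longrightarrow> ip q (u l) (u l') = 0) \<and>
             (\<forall>j<i. \<forall>k<q. r j k = (\<Sum>l<i. ip q (r j) (u l) * u l k))"
proof (induction i)
  case 0
  show ?case by simp
next
  case (Suc i)
  from Suc.IH obtain u where P1: "\<forall>l<i. ip q (u l) (u l) = 1 \<or> (\<forall>k<q. u l k = 0)"
    and P2: "\<forall>l<i. \<forall>l'<i. l \<noteq> l' \<longrightarrow> ip q (u l) (u l') = 0"
    and P3: "\<forall>j<i. \<forall>k<q. r j k = (\<Sum>l<i. ip q (r j) (u l) * u l k)" by (elim exE conjE)
  define c where "c = (\<lambda>l. ip q (r i) (u l))"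
  define w where "w = (\<lambda>k. r i k - (\<Sum>l<i. c l * u l k))"
  have collapse: "(\<Sum>l'<i. a l' * ip q (u l') (u l)) = a l * ip q (u l) (u l)" if l: "l < i" for a l
  proof -
    have "(\<Sum>l'<i. a l' * ip q (u l') (u l)) = a l * ip q (u l) (u l) + (\<Sum>l'\<in>{..<i}-{l}. a l' * ip q (u l') (u l))"
      using l by (simp add: sum.remove)
    also have "(\<Sum>l'\<in>{..<i}-{l}. a l' * ip q (u l') (u l)) = 0"
      using P2 l by (intro sum.neutral) auto
    finally show ?thesis by simp
  qed
  have A: "ip q w (u l) = 0" if l: "l < i" for l
  proof -
    have "ip q w (u l) = c l - (\<Sum>l'<i. c l' * ip q (u l') (u l))"
      unfolding w_def ip_diff_left ip_lin_left c_def by simp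
    also have "\<dots> = c l - c l * ip q (u l) (u l)" using collapse[OF l] by simp
    also have "\<dots> = 0"
    proof (cases "ip q (u l) (u l) = 1")
      case True then show ?thesis by simp
    next
      case False
      then have "\<forall>k<q. u l k = 0" using P1 l by blast
      then have "c l = 0" unfolding c_def by (intro ip_zero_right) auto
      then show ?thesis by simp
    qed
    finally show ?thesis .
  qed
  have Aw: "ip q (u l) w = 0" if "l < i" for l using A[OF that] by (simp add: ip_sym)
  have rj_w: "ip q (r j) w = 0" if j: "j < i" for j
  proof -
    have "ip q (r j) w = ip q (\<lambda>k. \<Sum>l<i. ip q (r j) (u l) * u l k) w"
      using P3 j by (intro ip_cong_left) auto
    also have "\<dots> = (\<Sum>l<i. ip q (r j) (u l) * ip q (u l) w)" by (rule ip_lin_left)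
    also have "\<dots> = 0" using A by (intro sum.neutral) (simp add: Aw)
    finally show ?thesis .
  qed
  have ri_w: "ip q (r i) w = ip q w w"
  proof -
    have e: "r i = (\<lambda>k. w k + (\<Sum>l<i. c l * u l k))" by (simp add: w_def)
    have "ip q (r i) w = ip q (\<lambda>k. w k + (\<Sum>l<i. c l * u l k)) w"
      by (rule arg_cong[where f="\<lambda>x. ip q x w", OF e])
    also have "\<dots> = ip q w w + (\<Sum>l<i. c l * ip q (u l) w)"
      unfolding ip_add_left ip_lin_left ..
    finally have "ip q (r i) w = ip q w w + (\<Sum>l<i. c l * ip q (u l) w)" .
    also have "(\<Sum>l<i. c l * ip q (u l) w) = 0" using A by (intro sum.neutral) (simp add: Aw)
    finally show ?thesis by simp
  qed
  show ?case
  proof (cases "ip q w w = 0")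
    case True
    define u' where "u' = u(i := (\<lambda>k. 0))"
    have eq: "\<And>l. l < i \<Longrightarrow> u' l = u l" by (simp add: u'_def)
    have wz: "\<And>k. k < q \<Longrightarrow> w k = 0" using ip_self_zero[OF True] by blast
    show ?thesis
    proof (intro exI[of _ u'] conjI allI impI)
      fix l assume "l < Suc i"
      then show "ip q (u' l) (u' l) = 1 \<or> (\<forall>k<q. u' l k = 0)"
        using P1 by (cases "l = i") (auto simp: u'_def)
    next
      fix l l' assume "l < Suc i" "l' < Suc i" "l \<noteq> l'"
      show "ip q (u' l) (u' l') = 0"
      proof (cases "l = i")
        case True then show ?thesis using \<open>l \<noteq> l'\<close> by (simp add: u'_def ip_def)
      next
        case False
        then have "l < i" using \<open>l < Suc i\<close> by simp
        show ?thesis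
        proof (cases "l' = i")
          case True then show ?thesis by (simp add: u'_def ip_def)
        next
          case False
          then have "l' < i" using \<open>l' < Suc i\<close> by simp
          then show ?thesis using P2 \<open>l < i\<close> \<open>l \<noteq> l'\<close> \<open>l \<noteq> i\<close> False by (simp add: u'_def)
        qed
      qed
    next
      fix j k assume j: "j < Suc i" and k: "k < q"
      have "(\<Sum>l<Suc i. ip q (r j) (u' l) * u' l k) = (\<Sum>l<i. ip q (r j) (u l) * u l k)"
        by (simp add: u'_def)
      also have "\<dots> = r j k"
      proof (cases "j = i")
        case True
        then show ?thesis using wz[OF k] by (simp add: w_def c_def)
      next
        case False
        then show ?thesis using P3 j k by simp
      qed
      finally show "r j k = (\<Sum>l<Suc i. ip q (r j) (u' l) * u' l k)" by simp
    qed
  next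
    case False
    define s where "s = sqrt (ip q w w)"
    have wpos: "ip q w w > 0" using False ip_self_nonneg[of q w] by simp
    then have spos: "s > 0" by (simp add: s_def)
    have ss: "s * s = ip q w w" using wpos by (simp add: s_def)
    define v where "v = (\<lambda>k. w k / s)"
    define u' where "u' = u(i := v)"
    have vv: "ip q v v = 1"
    proof -
      have "ip q v v = ip q w w / (s * s)" unfolding v_def ip_div_right
        by (subst ip_sym, subst ip_div_right) (simp add: ip_sym)
      then show ?thesis using ss wpos by simp
    qed
    have vu: "ip q v (u l) = 0" if "l < i" for l
    proof -
      have "ip q v (u l) = ip q (u l) w / s" unfolding v_def by (subst ip_sym, rule ip_div_right)
      then show ?thesis using A[OF that] by (simp add: ip_sym)
    qed
    show ?thesis
    proof (intro exI[of _ u'] conjI allI impI)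
      fix l assume "l < Suc i"
      then show "ip q (u' l) (u' l) = 1 \<or> (\<forall>k<q. u' l k = 0)"
        using P1 vv by (cases "l = i") (auto simp: u'_def)
    next
      fix l l' assume "l < Suc i" "l' < Suc i" "l \<noteq> l'"
      show "ip q (u' l) (u' l') = 0"
      proof (cases "l = i")
        case True
        then have "l' < i" using \<open>l' < Suc i\<close> \<open>l \<noteq> l'\<close> by simp
        then show ?thesis using True \<open>l \<noteq> l'\<close> vu by (simp add: u'_def)
      next
        case False
        then have "l < i" using \<open>l < Suc i\<close> by simp
        show ?thesis
        proof (cases "l' = i")
          case True then show ?thesis using vu[OF \<open>l < i\<close>] \<open>l \<noteq> i\<close> by (simp add: u'_def ip_sym[of q "u l" v])
        next
          case False
          then have "l' < i" using \<open>l' < Suc i\<close> by simp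
          then show ?thesis using P2 \<open>l < i\<close> \<open>l \<noteq> l'\<close> \<open>l \<noteq> i\<close> False by (simp add: u'_def)
        qed
      qed
    next
      fix j k assume j: "j < Suc i" and k: "k < q"
      have "(\<Sum>l<Suc i. ip q (r j) (u' l) * u' l k) = (\<Sum>l<i. ip q (r j) (u l) * u l k) + ip q (r j) v * v k"
        by (simp add: u'_def)
      also have "\<dots> = r j k"
      proof (cases "j = i")
        case True
        have "ip q (r i) v = ip q w w / s" unfolding v_def ip_div_right ri_w ..
        then have "ip q (r i) v = s" using ss spos by (metis nonzero_mult_div_cancel_left less_irrefl)
        then have "ip q (r i) v * v k = w k" using spos by (simp add: v_def)
        then show ?thesis using True by (simp add: w_def c_def)
      next
        case False
        then have ji: "j < i" using j by simp
        have "ip q (r j) v = 0" unfolding v_def ip_div_right rj_w[OF ji] by simp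
        then show ?thesis using P3 ji k by simp
      qed
      finally show "r j k = (\<Sum>l<Suc i. ip q (r j) (u' l) * u' l k)" by simp
    qed
  qed
qed


lemma reduce:
  fixes Y :: rmat and A :: "nat \<Rightarrow> rmat" and m :: nat
  shows "\<exists>Z\<in>mats n n. gram n n Z = gram n q Y \<and>
     (\<forall>c. (\<lambda>i k. \<Sum>l<m. c l * mprod n q (A l) Y i k) = (\<lambda>i k. 0)
        \<longrightarrow> (\<lambda>i k. \<Sum>l<m. c l * mprod n n (A l) Z i k) = (\<lambda>i k. 0))"
proof -
  define r where "r = (\<lambda>j k. Y j k)"
  obtain u where P3: "\<forall>j<n. \<forall>k<q. r j k = (\<Sum>l<n. ip q (r j) (u l) * u l k)"
    using gs[of n q r] by (elim exE conjE) (rule that)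
  define Z where "Z = (\<lambda>i t. if i < n \<and> t < n then ip q (r i) (u t) else 0)"
  have Zm: "Z \<in> mats n n" by (simp add: Z_def mats_def)
  have G: "gram n n Z = gram n q Y"
  proof (intro ext)
    fix i j
    show "gram n n Z i j = gram n q Y i j"
    proof (cases "i < n \<and> j < n")
      case True
      have "ip q (r j) (r i) = ip q (\<lambda>k. \<Sum>t<n. ip q (r j) (u t) * u t k) (r i)"
        using P3 True by (intro ip_cong_left) auto
      also have "\<dots> = (\<Sum>t<n. ip q (r j) (u t) * ip q (u t) (r i))" by (rule ip_lin_left)
      finally have e: "ip q (r j) (r i) = (\<Sum>t<n. ip q (r i) (u t) * ip q (r j) (u t))"
        by (simp add: ip_sym[of q "u _" "r i"] mult.commute)
      have "gram n n Z i j = (\<Sum>t<n. ip q (r i) (u t) * ip q (r j) (u t))"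
        using True by (simp add: gram_def Z_def)
      also have "\<dots> = ip q (r j) (r i)" using e by simp
      also have "\<dots> = gram n q Y i j" using True by (simp add: gram_def ip_def r_def mult.commute)
      finally show ?thesis .
    next
      case False
      then show ?thesis by (auto simp: gram_def)
    qed
  qed
  have M: "mprod n n B Z i t = ip q (\<lambda>k. mprod n q B Y i k) (u t)" if it: "i < n" "t < n" for B i t
  proof -
    have "mprod n n B Z i t = (\<Sum>j<n. B i j * ip q (r j) (u t))"
      using it by (simp add: mprod_def Z_def)
    also have "\<dots> = ip q (\<lambda>k. \<Sum>j<n. B i j * r j k) (u t)" by (rule ip_lin_left[symmetric])
    also have "\<dots> = ip q (\<lambda>k. mprod n q B Y i k) (u t)"
      using it by (intro ip_cong_left) (simp add: mprod_def r_def)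
    finally show ?thesis .
  qed
  show ?thesis
  proof (intro bexI[OF _ Zm] conjI G allI impI ext)
    fix c :: "nat \<Rightarrow> real" and i t
    assume h: "(\<lambda>i k. \<Sum>l<m. c l * mprod n q (A l) Y i k) = (\<lambda>i k. 0)"
    show "(\<Sum>l<m. c l * mprod n n (A l) Z i t) = 0"
    proof (cases "i < n \<and> t < n")
      case True
      have "(\<Sum>l<m. c l * mprod n n (A l) Z i t) = (\<Sum>l<m. c l * ip q (\<lambda>k. mprod n q (A l) Y i k) (u t))"
        using True M by simp
      also have "\<dots> = ip q (\<lambda>k. \<Sum>l<m. c l * mprod n q (A l) Y i k) (u t)" by (rule ip_lin_left[symmetric])
      also have "\<dots> = 0" using h by (simp add: ip_def fun_eq_iff)
      finally show ?thesis .
    next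
      case False
      then show ?thesis by (auto simp: mprod_def)
    qed
  qed
qed

lemma lin_indep_big:
  assumes a: "assm1a n m A b n" and Y: "Y \<in> Mset n m A b q"
  shows "lin_indep_AY n m A q Y"
proof -
  obtain Z where Zm: "Z \<in> mats n n" and G: "gram n n Z = gram n q Y"
    and T: "\<forall>c. (\<lambda>i k. \<Sum>l<m. c l * mprod n q (A l) Y i k) = (\<lambda>i k. 0)
        \<longrightarrow> (\<lambda>i k. \<Sum>l<m. c l * mprod n n (A l) Z i k) = (\<lambda>i k. 0)"
    using reduce[where n=n and q=q and Y=Y and m=m and A=A] by (elim bexE conjE) (rule that)
  have "Z \<in> Mset n m A b n" using Y Zm G by (simp add: Mset_def)
  then have "lin_indep_AY n m A n Z" using a by (simp add: assm1a_def)
  show ?thesis unfolding lin_indep_AY_def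
  proof (rule allI, rule impI)
    fix c :: "nat \<Rightarrow> real" assume "(\<lambda>i k. \<Sum>l<m. c l * mprod n q (A l) Y i k) = (\<lambda>i k. 0)"
    then have "(\<lambda>i k. \<Sum>l<m. c l * mprod n n (A l) Z i k) = (\<lambda>i k. 0)" using T by simp
    then show "\<forall>l<m. c l = 0" using \<open>lin_indep_AY n m A n Z\<close> unfolding lin_indep_AY_def by simp
  qed
qed


lemma part1:
  assumes As: "Assumption1 n m A b p" and pp: "p' \<le> p" and ne: "Mset n m A b p' \<noteq> {}"
  shows "Assumption1 n m A b p' \<and>
    (\<forall>Y\<in>Mset n m A b p. \<forall>Y'\<in>Mset n m A b p'. dimAY n m A p' Y' = dimAY n m A p Y)"
proof -
  have sub: "Mset n m A b p' \<subseteq> Mset n m A b p" by (rule Mset_mono[OF pp])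
  have mm: "Y' \<in> mats n p'" if "Y' \<in> Mset n m A b p'" for Y' using that by (simp add: Mset_def)
  have dm: "dimAY n m A p' Y' = dimAY n m A p Y'" if "Y' \<in> mats n p'" for Y'
    using dimAY_mono[OF that pp] by simp
  from As have "assm1a n m A b p \<or> assm1b n m A b p" by (simp add: Assumption1_def)
  then show ?thesis
  proof
    assume a: "assm1a n m A b p"
    have li: "lin_indep_AY n m A p' Y'" if Y': "Y' \<in> Mset n m A b p'" for Y'
    proof -
      have "lin_indep_AY n m A p Y'" using a sub Y' by (auto simp: assm1a_def)
      then show ?thesis using lin_indep_mono[OF mm[OF Y'] pp] by simp
    qed
    have "assm1a n m A b p'" using li by (simp add: assm1a_def)
    then have "Assumption1 n m A b p'" using ne by (simp add: Assumption1_def)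
    moreover have "\<forall>Y\<in>Mset n m A b p. \<forall>Y'\<in>Mset n m A b p'. dimAY n m A p' Y' = dimAY n m A p Y"
    proof (intro ballI)
      fix Y Y' assume Y: "Y \<in> Mset n m A b p" and Y': "Y' \<in> Mset n m A b p'"
      have "dimAY n m A p' Y' = m" by (rule dim_indep[OF li[OF Y']])
      moreover have "dimAY n m A p Y = m" using a Y by (intro dim_indep) (simp add: assm1a_def)
      ultimately show "dimAY n m A p' Y' = dimAY n m A p Y" by simp
    qed
    ultimately show ?thesis by blast
  next
    assume "assm1b n m A b p"
    then obtain U d where U: "open_mats n p U" and MU: "Mset n m A b p \<subseteq> U"
      and d: "\<forall>Y\<in>U. dimAY n m A p Y = d" by (auto simp: assm1b_def)
    define U' where "U' = U \<inter> mats n p'"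
    have oU': "open_mats n p' U'"
      unfolding open_mats_def
    proof (intro conjI ballI)
      show "U' \<subseteq> mats n p'" by (simp add: U'_def)
    next
      fix Y assume Y: "Y \<in> U'"
      then have YU: "Y \<in> U" and Ym: "Y \<in> mats n p'" by (auto simp: U'_def)
      then obtain e where e: "e > 0" and he: "\<forall>Z\<in>mats n p. mdist n p Y Z < e \<longrightarrow> Z \<in> U"
        using U by (auto simp: open_mats_def)
      have "\<forall>Z\<in>mats n p'. mdist n p' Y Z < e \<longrightarrow> Z \<in> U'"
      proof (intro ballI impI)
        fix Z assume Z: "Z \<in> mats n p'" and lt: "mdist n p' Y Z < e"
        have "mdist n p Y Z = mdist n p' Y Z" by (rule mdist_mono[OF Ym Z pp])
        then have "Z \<in> U" using he mats_mono[OF Z pp] lt by simp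
        then show "Z \<in> U'" using Z by (simp add: U'_def)
      qed
      then show "\<exists>e>0. \<forall>Z\<in>mats n p'. mdist n p' Y Z < e \<longrightarrow> Z \<in> U'" using e by blast
    qed
    have MU': "Mset n m A b p' \<subseteq> U'" using sub MU mm by (auto simp: U'_def)
    have dU': "\<forall>Y\<in>U'. dimAY n m A p' Y = d" using d dm by (auto simp: U'_def)
    have "assm1b n m A b p'" unfolding assm1b_def using oU' MU' dU' by blast
    then have "Assumption1 n m A b p'" using ne by (simp add: Assumption1_def)
    moreover have "\<forall>Y\<in>Mset n m A b p. \<forall>Y'\<in>Mset n m A b p'. dimAY n m A p' Y' = dimAY n m A p Y"
    proof (intro ballI)
      fix Y Y' assume Y: "Y \<in> Mset n m A b p" and Y': "Y' \<in> Mset n m A b p'"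
      have "dimAY n m A p' Y' = d" using dU' MU' Y' by blast
      moreover have "dimAY n m A p Y = d" using d MU Y by blast
      ultimately show "dimAY n m A p' Y' = dimAY n m A p Y" by simp
    qed
    ultimately show ?thesis by blast
  qed
qed

theorem proposition2:
  fixes n m :: nat and A :: "nat \<Rightarrow> rmat" and b :: "nat \<Rightarrow> real"
  assumes symA: "\<forall>l<m. sym_mat n (A l)"
  shows
    "(\<forall>p\<ge>1. Assumption1 n m A b p \<longrightarrow>
        (\<forall>p'. 1 \<le> p' \<and> p' \<le> p \<and> Mset n m A b p' \<noteq> {} \<longrightarrow>
           Assumption1 n m A b p' \<and>
           (\<forall>Y\<in>Mset n m A b p. \<forall>Y'\<in>Mset n m A b p'. dimAY n m A p' Y' = dimAY n m A p Y)))
     \<and>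
     ((1 \<le> n \<and> Mset n m A b n \<noteq> {} \<and> assm1a n m A b n) \<longrightarrow>
        (\<forall>p'. 1 \<le> p' \<and> Mset n m A b p' \<noteq> {} \<longrightarrow>
           Assumption1 n m A b p' \<and>
           (\<forall>Y\<in>Mset n m A b n. \<forall>Y'\<in>Mset n m A b p'. dimAY n m A p' Y' = dimAY n m A n Y)))"
proof (rule conjI)
  show "\<forall>p\<ge>1. Assumption1 n m A b p \<longrightarrow>
        (\<forall>p'. 1 \<le> p' \<and> p' \<le> p \<and> Mset n m A b p' \<noteq> {} \<longrightarrow>
           Assumption1 n m A b p' \<and>
           (\<forall>Y\<in>Mset n m A b p. \<forall>Y'\<in>Mset n m A b p'. dimAY n m A p' Y' = dimAY n m A p Y))"
    using part1 by blast
next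
  show "(1 \<le> n \<and> Mset n m A b n \<noteq> {} \<and> assm1a n m A b n) \<longrightarrow>
        (\<forall>p'. 1 \<le> p' \<and> Mset n m A b p' \<noteq> {} \<longrightarrow>
           Assumption1 n m A b p' \<and>
           (\<forall>Y\<in>Mset n m A b n. \<forall>Y'\<in>Mset n m A b p'. dimAY n m A p' Y' = dimAY n m A n Y))"
  proof (intro impI allI)
  fix p' assume H: "1 \<le> n \<and> Mset n m A b n \<noteq> {} \<and> assm1a n m A b n"
    and H': "1 \<le> p' \<and> Mset n m A b p' \<noteq> {}"
  have An: "Assumption1 n m A b n" using H by (simp add: Assumption1_def)
  show "Assumption1 n m A b p' \<and>
           (\<forall>Y\<in>Mset n m A b n. \<forall>Y'\<in>Mset n m A b p'. dimAY n m A p' Y' = dimAY n m A n Y)"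
  proof (cases "p' \<le> n")
    case True
    then show ?thesis using part1[OF An True] H' by blast
  next
    case False
    have li: "lin_indep_AY n m A p' Y'" if "Y' \<in> Mset n m A b p'" for Y'
      using lin_indep_big[OF _ that] H by blast
    have "assm1a n m A b p'" using li by (simp add: assm1a_def)
    then have "Assumption1 n m A b p'" using H' by (simp add: Assumption1_def)
    moreover have "\<forall>Y\<in>Mset n m A b n. \<forall>Y'\<in>Mset n m A b p'. dimAY n m A p' Y' = dimAY n m A n Y"
    proof (intro ballI)
      fix Y Y' assume Y: "Y \<in> Mset n m A b n" and Y': "Y' \<in> Mset n m A b p'"
      have "dimAY n m A p' Y' = m" by (rule dim_indep[OF li[OF Y']])
      moreover have "dimAY n m A n Y = m" using H Y by (intro dim_indep) (simp add: assm1a_def)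
      ultimately show "dimAY n m A p' Y' = dimAY n m A n Y" by simp
    qed
    ultimately show ?thesis by blast
  qed
  qed
qed

end
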